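(* The set $R_{0,2}$ of all Riordan matrices whose $A$-sequence has the form $(1,a_1,0,a_3,a_4,\ldots)$ (i.e. $a_0=1$ and $a_2=0$) is a subgroup of the Riordan group.
   Context: Let $K$ be $\mathbb{R}$ or $\mathbb{C}$. A (proper) Riordan matrix is a pair $(g,f)$ of formal power series in $K[[t]]$ with $g(0)=1$, $f(0)=0$, $f'(0)\neq 0$, identified with the lower triangular matrix with entries $[t^n]g(t)f(t)^k$. The Riordan group is the set of these matrices under matrix multiplication, $(g_1,f_1)(g_2,f_2)=(g_1\,g_2(f_1),\,f_2(f_1))$, with identity $(1,t)$. The $A$-sequence $(a_j)_{j\ge0}$ of $(g,f)$ is the unique sequence whose generating function $A(t)$ satisfies $f(t)=tA(f(t))$. *)

theory Defs
  imports "HOL-Computational_Algebra.Formal_Power_Series" "HOL-Algebra.Group"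
begin

text \<open>A proper Riordan matrix is identified with the pair (g,f) of formal power series
  with g(0)=1, f(0)=0, f'(0) nonzero.\<close>

definition riordan_set :: "('a::field fps \<times> 'a fps) set" where
  "riordan_set = {(g, f). fps_nth g 0 = 1 \<and> fps_nth f 0 = 0 \<and> fps_nth f 1 \<noteq> 0}"

definition riordan_mult :: "'a::field fps \<times> 'a fps \<Rightarrow> 'a fps \<times> 'a fps \<Rightarrow> 'a fps \<times> 'a fps" where
  "riordan_mult p q = (fst p * (fst q oo snd p), snd q oo snd p)"

definition riordan_group :: "('a::field fps \<times> 'a fps) monoid" where
  "riordan_group = \<lparr> carrier = riordan_set, mult = riordan_mult, one = (1, fps_X) \<rparr>"

definition A_seq :: "'a::field fps \<Rightarrow> 'a fps" where
  "A_seq f = (THE A. f = fps_X * (A oo f))"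

definition R02 :: "('a::field fps \<times> 'a fps) set" where
  "R02 = {(g, f) \<in> riordan_set. fps_nth (A_seq f) 0 = 1 \<and> fps_nth (A_seq f) 2 = 0}"

end

theory Submission
  imports Defs
begin

lemma comp_coeffs:
  fixes a b :: "'a::field fps"
  assumes b0: "fps_nth b 0 = 0"
  shows "fps_nth (a oo b) 1 = fps_nth a 1 * fps_nth b 1"
    and "fps_nth (a oo b) 2 = fps_nth a 1 * fps_nth b 2 + fps_nth a 2 * (fps_nth b 1)^2"
    and "fps_nth (a oo b) 3 = fps_nth a 1 * fps_nth b 3 + 2 * fps_nth a 2 * fps_nth b 1 * fps_nth b 2 + fps_nth a 3 * (fps_nth b 1)^3"
proof -
  have p2: "fps_nth (b^2) 1 = 0" "fps_nth (b^2) 2 = (fps_nth b 1)^2" "fps_nth (b^2) 3 = 2 * fps_nth b 1 * fps_nth b 2" "fps_nth (b^2) 0 = 0"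
    using b0 by (simp_all add: power2_eq_square fps_mult_nth numeral_3_eq_3 numeral_2_eq_2 algebra_simps)
  have p3: "fps_nth (b^3) 1 = 0" "fps_nth (b^3) 2 = 0" "fps_nth (b^3) 3 = (fps_nth b 1)^3"
    using b0 p2 by (simp_all add: power3_eq_cube fps_mult_nth numeral_3_eq_3 numeral_2_eq_2 algebra_simps)
  show "fps_nth (a oo b) 1 = fps_nth a 1 * fps_nth b 1"
    using b0 by (simp add: fps_compose_nth)
  show "fps_nth (a oo b) 2 = fps_nth a 1 * fps_nth b 2 + fps_nth a 2 * (fps_nth b 1)^2"
    using b0 p2 by (simp add: fps_compose_nth numeral_2_eq_2)
  show "fps_nth (a oo b) 3 = fps_nth a 1 * fps_nth b 3 + 2 * fps_nth a 2 * fps_nth b 1 * fps_nth b 2 + fps_nth a 3 * (fps_nth b 1)^3"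
    using b0 p2 p3 by (simp add: fps_compose_nth numeral_3_eq_3 numeral_2_eq_2)
qed

lemma fps_inv_nth0: "fps_nth (fps_inv f) 0 = 0"
  by (simp add: fps_inv_def)

lemma A_seq_eq:
  fixes f :: "'a::field fps"
  assumes f0: "fps_nth f 0 = 0" and f1: "fps_nth f 1 \<noteq> 0"
  shows "f = fps_X * (A_seq f oo f)"
proof -
  define A0 where "A0 = fps_shift 1 f oo fps_inv f"
  have ex: "f = fps_X * (A0 oo f)"
  proof -
    have "A0 oo f = fps_shift 1 f oo (fps_inv f oo f)"
      unfolding A0_def using f0 fps_inv_nth0[of f] by (rule fps_compose_assoc[symmetric])
    also have "\<dots> = fps_shift 1 f" using fps_inv[OF f0 f1] by simp
    finally have e: "A0 oo f = fps_shift 1 f" .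
    show ?thesis unfolding e
      by (rule fps_ext) (simp add: f0)
  qed
  have un: "B = A0" if "f = fps_X * (B oo f)" for B
  proof -
    have "fps_X * (B oo f) = fps_X * (A0 oo f)" using that ex by simp
    then have "B oo f = A0 oo f" by simp
    then have "(B oo f) oo fps_inv f = (A0 oo f) oo fps_inv f" by simp
    moreover have "C oo f oo fps_inv f = C" for C
    proof -
      have "C oo f oo fps_inv f = C oo (f oo fps_inv f)"
        using fps_inv_nth0[of f] f0 by (rule fps_compose_assoc[symmetric])
      also have "\<dots> = C" using fps_inv_right[OF f0 f1] by simp
      finally show ?thesis .
    qed
    ultimately show ?thesis by simp
  qed
  have "f = fps_X * (A_seq f oo f)"
    unfolding A_seq_def
    by (rule theI[of "\<lambda>A. f = fps_X * (A oo f)"]) (use ex un in blast)+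
  then show ?thesis .
qed

lemma R02_iff:
  fixes g f :: "'a::field fps"
  shows "(g, f) \<in> R02 \<longleftrightarrow> (g, f) \<in> riordan_set \<and> fps_nth f 1 = 1 \<and> fps_nth f 3 = (fps_nth f 2)^2"
proof (cases "(g, f) \<in> riordan_set")
  case False
  then show ?thesis by (simp add: R02_def)
next
  case True
  then have f0: "fps_nth f 0 = 0" and f1: "fps_nth f 1 \<noteq> 0" by (auto simp: riordan_set_def)
  define A where "A = A_seq f"
  have eq: "f = fps_X * (A oo f)" unfolding A_def by (rule A_seq_eq[OF f0 f1])
  have "fps_nth f 1 = fps_nth (fps_X * (A oo f)) 1" using eq by simp
  then have c1: "fps_nth f 1 = fps_nth A 0" by simp
  have "fps_nth f 2 = fps_nth (fps_X * (A oo f)) 2" using eq by simp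
  then have c2: "fps_nth f 2 = fps_nth A 1 * fps_nth f 1" using comp_coeffs(1)[OF f0, of A] by simp
  have "fps_nth f 3 = fps_nth (fps_X * (A oo f)) 3" using eq by simp
  then have c3: "fps_nth f 3 = fps_nth A 1 * fps_nth f 2 + fps_nth A 2 * (fps_nth f 1)^2"
    using comp_coeffs(2)[OF f0, of A] by (simp add: numeral_3_eq_3 numeral_2_eq_2)
  have r: "(g, f) \<in> R02 \<longleftrightarrow> fps_nth A 0 = 1 \<and> fps_nth A 2 = 0"
    using True by (simp add: R02_def A_def)
  show ?thesis
  proof
    assume "(g, f) \<in> R02"
    then have "fps_nth A 0 = 1" "fps_nth A 2 = 0" using r by auto
    then show "(g, f) \<in> riordan_set \<and> fps_nth f 1 = 1 \<and> fps_nth f 3 = (fps_nth f 2)^2"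
      using True c1 c2 c3 by (simp add: power2_eq_square)
  next
    assume a: "(g, f) \<in> riordan_set \<and> fps_nth f 1 = 1 \<and> fps_nth f 3 = (fps_nth f 2)^2"
    then have "fps_nth A 0 = 1" using c1 by simp
    moreover have "fps_nth A 2 = 0"
    proof -
      have f11: "fps_nth f 1 = 1" and e: "fps_nth f 3 = (fps_nth f 2)^2" using a by auto
      have d2: "fps_nth f 2 = fps_nth A 1" using c2 f11 by simp
      have d3: "fps_nth f 3 = fps_nth A 1 * fps_nth A 1 + fps_nth A 2" using c3 d2 f11 by simp
      show ?thesis using e d2 d3 by (simp add: power2_eq_square)
    qed
    ultimately show "(g, f) \<in> R02" using r by simp
  qed
qed

lemma riordan_monoid: "monoid (riordan_group :: ('a::field fps \<times> 'a fps) monoid)"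
proof (rule monoidI)
  fix x y z :: "'a fps \<times> 'a fps"
  assume x: "x \<in> carrier riordan_group" and y: "y \<in> carrier riordan_group" and z: "z \<in> carrier riordan_group"
  obtain g1 f1 where x': "x = (g1, f1)" by fastforce
  obtain g2 f2 where y': "y = (g2, f2)" by fastforce
  obtain g3 f3 where z': "z = (g3, f3)" by fastforce
  have h1: "fps_nth f1 0 = 0" "fps_nth f1 1 \<noteq> 0" "fps_nth g1 0 = 1"
    using x x' by (auto simp: riordan_group_def riordan_set_def)
  have h2: "fps_nth f2 0 = 0" "fps_nth f2 1 \<noteq> 0" "fps_nth g2 0 = 1"
    using y y' by (auto simp: riordan_group_def riordan_set_def)
  have h3: "fps_nth f3 0 = 0" "fps_nth f3 1 \<noteq> 0" "fps_nth g3 0 = 1"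
    using z z' by (auto simp: riordan_group_def riordan_set_def)
  show "x \<otimes>\<^bsub>riordan_group\<^esub> y \<in> carrier riordan_group"
    using h1 h2 comp_coeffs(1)[OF h1(1), of f2]
    by (simp add: x' y' riordan_group_def riordan_set_def riordan_mult_def)
  show "x \<otimes>\<^bsub>riordan_group\<^esub> y \<otimes>\<^bsub>riordan_group\<^esub> z =
        x \<otimes>\<^bsub>riordan_group\<^esub> (y \<otimes>\<^bsub>riordan_group\<^esub> z)"
    using h1 h2
    by (simp add: x' y' z' riordan_group_def riordan_mult_def fps_compose_mult_distrib
        fps_compose_assoc mult.assoc)
next
  show "\<one>\<^bsub>riordan_group\<^esub> \<in> carrier (riordan_group :: ('a::field fps \<times> 'a fps) monoid)"
    by (simp add: riordan_group_def riordan_set_def)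
next
  fix x :: "'a fps \<times> 'a fps"
  assume x: "x \<in> carrier riordan_group"
  obtain g1 f1 where x': "x = (g1, f1)" by fastforce
  have h1: "fps_nth f1 0 = 0" "fps_nth f1 1 \<noteq> 0" "fps_nth g1 0 = 1"
    using x x' by (auto simp: riordan_group_def riordan_set_def)
  show "\<one>\<^bsub>riordan_group\<^esub> \<otimes>\<^bsub>riordan_group\<^esub> x = x"
    by (simp add: x' riordan_group_def riordan_mult_def)
  show "x \<otimes>\<^bsub>riordan_group\<^esub> \<one>\<^bsub>riordan_group\<^esub> = x"
    using h1 by (simp add: x' riordan_group_def riordan_mult_def)
qed

lemma R02_subgroup: "subgroup (R02 :: ('a::field fps \<times> 'a fps) set) riordan_group"
proof
  interpret M: monoid "riordan_group :: ('a::field fps \<times> 'a fps) monoid" by (rule riordan_monoid)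
  show sub: "(R02 :: ('a::field fps \<times> 'a fps) set) \<subseteq> carrier riordan_group"
    by (auto simp: R02_def riordan_group_def)
  show "\<one>\<^bsub>riordan_group\<^esub> \<in> (R02 :: ('a::field fps \<times> 'a fps) set)"
    by (simp add: R02_iff riordan_group_def riordan_set_def)
  fix x y :: "'a fps \<times> 'a fps"
  assume x: "x \<in> R02"
  obtain g1 f1 where x': "x = (g1, f1)" by fastforce
  have h1: "fps_nth f1 0 = 0" "fps_nth f1 1 = 1" "fps_nth g1 0 = 1" "fps_nth f1 3 = (fps_nth f1 2)^2"
    using x x' by (auto simp: R02_iff riordan_set_def)
  have xc: "x \<in> carrier riordan_group" using x sub by auto
  {
    assume y: "y \<in> R02"
    obtain g2 f2 where y': "y = (g2, f2)" by fastforce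
    have h2: "fps_nth f2 0 = 0" "fps_nth f2 1 = 1" "fps_nth g2 0 = 1" "fps_nth f2 3 = (fps_nth f2 2)^2"
      using y y' by (auto simp: R02_iff riordan_set_def)
    have yc: "y \<in> carrier riordan_group" using y sub by auto
    have pc: "x \<otimes>\<^bsub>riordan_group\<^esub> y \<in> carrier riordan_group" using xc yc by simp
    have pe: "x \<otimes>\<^bsub>riordan_group\<^esub> y = (g1 * (g2 oo f1), f2 oo f1)"
      by (simp add: x' y' riordan_group_def riordan_mult_def)
    show "x \<otimes>\<^bsub>riordan_group\<^esub> y \<in> R02"
      using pc unfolding pe
      using comp_coeffs[OF h1(1), of f2] h1 h2
      by (simp add: R02_iff riordan_group_def power2_eq_square algebra_simps)
  }
  define fi where "fi = fps_inv f1"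
  define y0 where "y0 = (inverse (g1 oo fi), fi)"
  have fi0: "fps_nth fi 0 = 0" unfolding fi_def by (rule fps_inv_nth0)
  have f1ne: "fps_nth f1 1 \<noteq> 0" using h1 by simp
  have rinv: "f1 oo fi = fps_X" unfolding fi_def by (rule fps_inv_right[OF h1(1) f1ne])
  have linv: "fi oo f1 = fps_X" unfolding fi_def by (rule fps_inv[OF h1(1) f1ne])
  have k1: "fps_nth (f1 oo fi) 1 = 1" and k2: "fps_nth (f1 oo fi) 2 = 0" and k3: "fps_nth (f1 oo fi) 3 = 0"
    unfolding rinv by simp_all
  have fi1: "fps_nth fi 1 = 1" using k1 comp_coeffs(1)[OF fi0, of f1] h1 by simp
  have fi2: "fps_nth fi 2 = - fps_nth f1 2" using k2 comp_coeffs(2)[OF fi0, of f1] h1 fi1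
    by (simp add: eq_neg_iff_add_eq_0 add.commute)
  have fi3': "fps_nth fi 3 = (fps_nth f1 2)^2" using k3 comp_coeffs(3)[OF fi0, of f1] h1 fi1 fi2
    by (simp add: power2_eq_square algebra_simps eq_neg_iff_add_eq_0)
  have fi3: "fps_nth fi 3 = (fps_nth fi 2)^2" using fi3' fi2 by simp
  have gi0: "fps_nth (g1 oo fi) 0 \<noteq> 0" using h1 by simp
  have y0R: "y0 \<in> R02"
    using fi0 fi1 fi3 gi0 h1 by (simp add: y0_def R02_iff riordan_set_def)
  have y0c: "y0 \<in> carrier riordan_group" using y0R sub by auto
  have "inverse (g1 oo fi) oo f1 = inverse ((g1 oo fi) oo f1)"
    using fps_inverse_compose[OF h1(1) gi0] .
  also have "(g1 oo fi) oo f1 = g1 oo (fi oo f1)"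
    using h1(1) fi0 by (rule fps_compose_assoc[symmetric])
  also have "\<dots> = g1" using linv by simp
  finally have e1: "inverse (g1 oo fi) oo f1 = inverse g1" .
  have m1: "x \<otimes>\<^bsub>riordan_group\<^esub> y0 = \<one>\<^bsub>riordan_group\<^esub>"
    using e1 linv h1 by (simp add: x' y0_def riordan_group_def riordan_mult_def inverse_mult_eq_1')
  have m2: "y0 \<otimes>\<^bsub>riordan_group\<^esub> x = \<one>\<^bsub>riordan_group\<^esub>"
    using rinv gi0 by (simp add: x' y0_def riordan_group_def riordan_mult_def inverse_mult_eq_1)
  have "y0 = inv\<^bsub>riordan_group\<^esub> x" by (rule M.inv_unique'[OF xc y0c m1 m2])
  then show "inv\<^bsub>riordan_group\<^esub> x \<in> R02" using y0R by simp
qed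

theorem theorem4p1:
  shows "subgroup (R02 :: (real fps \<times> real fps) set) riordan_group
       \<and> subgroup (R02 :: (complex fps \<times> complex fps) set) riordan_group"
  using R02_subgroup[where 'a=real] R02_subgroup[where 'a=complex] by blast

end
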